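(* The Lehner expansion of an irrational $\alpha\in(1,2)$ is eventually periodic if and only if $\alpha$ is a quadratic irrational.
   Context: The Lehner map on $[1,2)$ is $L(x)=\frac{1}{2-x}$ for $x\in[1,3/2)$ and $L(x)=\frac{1}{x-1}$ for $x\in[3/2,2)$. For irrational $x\in(1,2)$, its Lehner digits are $(a_i,\epsilon_i)=(2,-1)$ if $L^i(x)\in[1,3/2)$ and $(1,+1)$ if $L^i(x)\in[3/2,2)$, and $x=a_0+\cfrac{\epsilon_0}{a_1+\cfrac{\epsilon_1}{a_2+\cdots}}$ is its Lehner expansion. Eventually periodic means the digit sequence $((a_i,\epsilon_i))_{i\ge0}$ is eventually periodic. *)

theory Defs
  imports Complex_Main
begin

definition lehner_map :: "real \<Rightarrow> real" where
  "lehner_map x = (if x < 3/2 then 1 / (2 - x) else 1 / (x - 1))"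

text \<open>The i-th Lehner digit (a_i, epsilon_i) of x.\<close>
definition lehner_digit :: "real \<Rightarrow> nat \<Rightarrow> int \<times> int" where
  "lehner_digit x i =
     (if (lehner_map ^^ i) x < 3/2 then (2, -1) else (1, 1))"

definition eventually_periodic :: "(nat \<Rightarrow> 'a) \<Rightarrow> bool" where
  "eventually_periodic f \<longleftrightarrow> (\<exists>N p. p > 0 \<and> (\<forall>i\<ge>N. f (i + p) = f i))"

definition quadratic_irrational :: "real \<Rightarrow> bool" where
  "quadratic_irrational x \<longleftrightarrow> x \<notin> \<rat> \<and>
     (\<exists>a b c :: int. a \<noteq> 0 \<and> of_int a * x^2 + of_int b * x + of_int c = 0)"

end

theory Submission
  imports Defs
begin


lemma irr1: assumes "(b::real) \<notin> \<rat>" shows "1/(2-b) \<notin> \<rat>"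
proof
  assume h: "1/(2-b) \<in> \<rat>"
  have "2 - b \<noteq> 0" using assms by (metis Rats_number_of eq_iff_diff_eq_0)
  hence "b = 2 - 1/(1/(2-b))" by simp
  also have "\<dots> \<in> \<rat>" using Rats_diff[OF Rats_number_of[of "Num.Bit0 Num.One"] Rats_divide[OF Rats_1 h]] by simp
  finally show False using assms by simp
qed

lemma irr2: assumes "(b::real) \<notin> \<rat>" shows "1/(b-1) \<notin> \<rat>"
proof
  assume h: "1/(b-1) \<in> \<rat>"
  have "b - 1 \<noteq> 0" using assms by auto
  hence "b = 1 + 1/(1/(b-1))" by simp
  also have "\<dots> \<in> \<rat>" using Rats_add[OF Rats_1 Rats_divide[OF Rats_1 h]] by simp
  finally show False using assms by simp
qed

lemma T_irr: "(b::real) \<notin> \<rat> \<Longrightarrow> lehner_map b \<notin> \<rat>"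
  unfolding lehner_map_def using irr1 irr2 by auto

lemma T_range: assumes "1 < x" "x < 2" "x \<notin> \<rat>"
  shows "1 < lehner_map x \<and> lehner_map x < 2"
proof (cases "x < 3/2")
  case True
  then show ?thesis using assms by (simp add: lehner_map_def field_simps)
next
  case False
  have "x \<noteq> 3/2" using assms(3) by (metis Rats_number_of Rats_divide)
  with False have "x > 3/2" by simp
  then show ?thesis using assms False by (simp add: lehner_map_def field_simps)
qed

lemma Tn_props: assumes "1 < x" "x < 2" "x \<notin> \<rat>"
  shows "1 < (lehner_map^^n) x \<and> (lehner_map^^n) x < 2 \<and> (lehner_map^^n) x \<notin> \<rat>"
  using assms
proof (induction n)
  case 0 then show ?case by simp
next
  case (Suc n)
  then show ?case using T_range T_irr by simp
qed



lemma stepA: fixes p q r w u :: real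
  assumes "0<u" "u<1" "r\<ge>0" "w\<ge>1"
  shows "(p*u+q)/(r*u+w) = ((p+q)*(u/(1-u)) + q)/((r+w)*(u/(1-u)) + w)"
proof -
  have "r*u \<ge> 0" using assms by simp
  have e: "(r+w)*u + w*(1-u) = r*u+w" by (simp add: algebra_simps)
  have d: "r*u+w > 0" "(r+w)*u + w*(1-u) > 0" using assms \<open>r*u\<ge>0\<close> e by linarith+
  have u1: "1 - u > 0" using assms by simp
  have n: "(p+q)*(u/(1-u)) + q = (p*u+q)/(1-u)" using u1 by (simp add: field_simps)
  have m: "(r+w)*(u/(1-u)) + w = (r*u+w)/(1-u)" using u1 by (simp add: field_simps)
  show ?thesis unfolding n m using u1 d by simp
qed

lemma stepB: fixes p q r w u :: real
  assumes "0<u" "u<1" "r\<ge>0" "w\<ge>1"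
  shows "(p*u+q)/(r*u+w) = (q*((1-u)/u) + (p+q))/(w*((1-u)/u) + (r+w))"
proof -
  have "r*u \<ge> 0" using assms by simp
  have e: "w*(1-u) + (r+w)*u = r*u+w" by (simp add: algebra_simps)
  have d: "r*u+w > 0" "w*(1-u) + (r+w)*u > 0" using assms \<open>r*u\<ge>0\<close> e by linarith+
  have n: "q*((1-u)/u) + (p+q) = (p*u+q)/u" using assms by (simp add: field_simps)
  have m: "w*((1-u)/u) + (r+w) = (r*u+w)/u" using assms by (simp add: field_simps)
  show ?thesis unfolding n m using assms d by simp
qed

lemma TA: "z < 3/2 \<Longrightarrow> lehner_map z - 1 = (z-1)/(1-(z-1))"
  by (simp add: lehner_map_def field_simps)
lemma TB: "\<not> z < 3/2 \<Longrightarrow> lehner_map z - 1 = (1-(z-1))/(z-1)"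
  by (simp add: lehner_map_def field_simps)

lemma rep:
  assumes x: "1<x" "x<2" "x\<notin>\<rat>" and y: "1<y" "y<2" "y\<notin>\<rat>"
  and same: "\<forall>i<n. ((lehner_map^^i) x < 3/2 \<longleftrightarrow> (lehner_map^^i) y < 3/2)"
  shows "\<exists>p q r w::int. r \<ge> 0 \<and> w \<ge> 1 \<and> w*(r+w) \<ge> int n + 1 \<and> \<bar>p*w - q*r\<bar> = 1 \<and>
     x - 1 = (of_int p*((lehner_map^^n) x - 1) + of_int q)/(of_int r*((lehner_map^^n) x - 1) + of_int w) \<and>
     y - 1 = (of_int p*((lehner_map^^n) y - 1) + of_int q)/(of_int r*((lehner_map^^n) y - 1) + of_int w)"
  using same
proof (induction n)
  case 0
  show ?case by (rule exI[of _ 1], rule exI[of _ 0], rule exI[of _ 0], rule exI[of _ 1]) simp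
next
  case (Suc n)
  then obtain p q r w :: int where IH: "r \<ge> 0" "w \<ge> 1" "w*(r+w) \<ge> int n + 1" "\<bar>p*w - q*r\<bar> = 1"
     "x - 1 = (of_int p*((lehner_map^^n) x - 1) + of_int q)/(of_int r*((lehner_map^^n) x - 1) + of_int w)"
     "y - 1 = (of_int p*((lehner_map^^n) y - 1) + of_int q)/(of_int r*((lehner_map^^n) y - 1) + of_int w)"
    by auto
  define X where "X = (lehner_map^^n) x"
  define Y where "Y = (lehner_map^^n) y"
  have X: "1 < X" "X < 2" using Tn_props[OF x] X_def by auto
  have Y: "1 < Y" "Y < 2" using Tn_props[OF y] Y_def by auto
  have sm: "X < 3/2 \<longleftrightarrow> Y < 3/2" using Suc.prems X_def Y_def by auto
  have sx: "(lehner_map^^Suc n) x = lehner_map X" using X_def by simp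
  have sy: "(lehner_map^^Suc n) y = lehner_map Y" using Y_def by simp
  have rr: "real_of_int r \<ge> 0" "real_of_int w \<ge> 1" using IH by auto
  show ?case
  proof (cases "X < 3/2")
    case True
    with sm have T2: "Y < 3/2" by simp
    show ?thesis
    proof (rule exI[of _ "p+q"], rule exI[of _ q], rule exI[of _ "r+w"], rule exI[of _ w], intro conjI)
      show "0 \<le> r + w" "1 \<le> w" using IH by auto
      have "w*(r+w) + 1 \<le> w*(r+w+w)" using IH by (simp add: algebra_simps) (smt (verit) mult_le_cancel_right1)
      then show "int (Suc n) + 1 \<le> w * (r + w + w)" using IH by simp
      show "\<bar>(p + q) * w - q * (r + w)\<bar> = 1" using IH by (simp add: algebra_simps)
      show "x - 1 = (of_int (p+q)*((lehner_map^^Suc n) x - 1) + of_int q)/(of_int (r+w)*((lehner_map^^Suc n) x - 1) + of_int w)"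
        unfolding sx TA[OF True] using IH(5) stepA[OF _ _ rr, of "X-1" "of_int p" "of_int q"] X True
        by (simp add: X_def)
      show "y - 1 = (of_int (p+q)*((lehner_map^^Suc n) y - 1) + of_int q)/(of_int (r+w)*((lehner_map^^Suc n) y - 1) + of_int w)"
        unfolding sy TA[OF T2] using IH(6) stepA[OF _ _ rr, of "Y-1" "of_int p" "of_int q"] Y T2
        by (simp add: Y_def)
    qed
  next
    case False
    with sm have T2: "\<not> Y < 3/2" by simp
    show ?thesis
    proof (rule exI[of _ q], rule exI[of _ "p+q"], rule exI[of _ w], rule exI[of _ "r+w"], intro conjI)
      show "0 \<le> w" "1 \<le> r + w" using IH by auto
      have "w*(r+w) + 1 \<le> (r+w)*(w+(r+w))" using IH by (simp add: algebra_simps) (smt (verit) mult_le_cancel_right1 mult_nonneg_nonneg)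
      then show "int (Suc n) + 1 \<le> (r+w) * (w + (r + w))" using IH by simp
      show "\<bar>q * (r + w) - (p + q) * w\<bar> = 1" using IH by (simp add: algebra_simps abs_minus_commute)
      show "x - 1 = (of_int q*((lehner_map^^Suc n) x - 1) + of_int (p+q))/(of_int w*((lehner_map^^Suc n) x - 1) + of_int (r+w))"
        unfolding sx TB[OF False] using IH(5) stepB[OF _ _ rr, of "X-1" "of_int p" "of_int q"] X False
        by (simp add: X_def)
      show "y - 1 = (of_int q*((lehner_map^^Suc n) y - 1) + of_int (p+q))/(of_int w*((lehner_map^^Suc n) y - 1) + of_int (r+w))"
        unfolding sy TB[OF T2] using IH(6) stepB[OF _ _ rr, of "Y-1" "of_int p" "of_int q"] Y T2
        by (simp add: Y_def)
    qed
  qed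
qed



lemma keyineq: fixes u v r w :: real
  assumes "0<u" "u<1" "0<v" "v<1" "r\<ge>0" "w\<ge>1"
  shows "\<bar>u-v\<bar> * (w*(r+w)) \<le> (r*u+w)*(r*v+w)"
proof (cases "u \<le> v")
  case True
  have "(r*u+w)*(r*v+w) - (v-u)*(w*(r+w)) = r*r*u*v + 2*r*w*u + w*w*(1-v) + u*w*w"
    by (simp add: algebra_simps)
  moreover have "r*r*u*v \<ge> 0" "r*w*u \<ge> 0" "w*w*(1-v) \<ge> 0" "u*w*w \<ge> 0" using assms by auto
  ultimately show ?thesis using True by (simp add: abs_if)
next
  case False
  have "(r*u+w)*(r*v+w) - (u-v)*(w*(r+w)) = r*r*u*v + 2*r*w*v + w*w*(1-u) + v*w*w"
    by (simp add: algebra_simps)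
  moreover have "r*r*u*v \<ge> 0" "r*w*v \<ge> 0" "w*w*(1-u) \<ge> 0" "v*w*w \<ge> 0" using assms by auto
  ultimately show ?thesis using False by (simp add: abs_if)
qed

lemma bound: fixes u v p q r w :: real
  assumes "0<u" "u<1" "0<v" "v<1" "r\<ge>0" "w\<ge>1" "\<bar>p*w - q*r\<bar> = 1"
  shows "\<bar>(p*u+q)/(r*u+w) - (p*v+q)/(r*v+w)\<bar> \<le> 1/(w*(r+w))"
proof -
  have ru: "r*u \<ge> 0" "r*v \<ge> 0" using assms by auto
  have d1: "r*u+w > 0" "r*v+w > 0" using ru assms by linarith+
  have eq: "(p*u+q)/(r*u+w) - (p*v+q)/(r*v+w) = (p*w-q*r)*(u-v)/((r*u+w)*(r*v+w))"
    using d1 by (simp add: field_simps)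
  have ab: "\<bar>(p*w-q*r)*(u-v)/((r*u+w)*(r*v+w))\<bar> = \<bar>u-v\<bar>/((r*u+w)*(r*v+w))"
    using d1 assms(7) by (simp add: abs_mult)
  have wp: "w*(r+w) > 0" using assms by simp
  have "\<bar>u-v\<bar>/((r*u+w)*(r*v+w)) \<le> 1/(w*(r+w))"
    using keyineq[OF assms(1-6)] d1 wp by (simp add: divide_simps mult.commute)
  then show ?thesis unfolding eq ab .
qed

lemma cylinder:
  assumes x: "1<x" "x<2" "x\<notin>\<rat>" and y: "1<y" "y<2" "y\<notin>\<rat>"
  and same: "\<forall>i. ((lehner_map^^i) x < 3/2 \<longleftrightarrow> (lehner_map^^i) y < 3/2)"
  shows "x = y"
proof (rule ccontr)
  assume ne: "x \<noteq> y"
  then have "\<bar>x - y\<bar> > 0" by simp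
  then obtain n where n: "n \<noteq> 0" "inverse (real n) < \<bar>x - y\<bar>" using real_arch_inverse by blast
  obtain p q r w :: int where R: "r \<ge> 0" "w \<ge> 1" "w*(r+w) \<ge> int n + 1" "\<bar>p*w - q*r\<bar> = 1"
     "x - 1 = (of_int p*((lehner_map^^n) x - 1) + of_int q)/(of_int r*((lehner_map^^n) x - 1) + of_int w)"
     "y - 1 = (of_int p*((lehner_map^^n) y - 1) + of_int q)/(of_int r*((lehner_map^^n) y - 1) + of_int w)"
    using rep[OF x y] same by blast
  have X: "1 < (lehner_map^^n) x" "(lehner_map^^n) x < 2" using Tn_props[OF x] by auto
  have Y: "1 < (lehner_map^^n) y" "(lehner_map^^n) y < 2" using Tn_props[OF y] by auto
  have det: "\<bar>real_of_int p * real_of_int w - real_of_int q * real_of_int r\<bar> = 1"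
    using R(4) by (metis of_int_1 of_int_abs of_int_diff of_int_mult)
  have "\<bar>(x-1) - (y-1)\<bar> \<le> 1/(of_int w * (of_int r + of_int w))"
    unfolding R(5) R(6) apply (rule bound) using X Y R det by auto
  also have "\<dots> \<le> 1/(real n + 1)"
  proof -
    have "real n + 1 \<le> of_int w * (of_int r + of_int w)" using R(3)
      by (metis of_int_add of_int_le_iff of_int_mult of_int_of_nat_eq of_int_1)
    then show ?thesis by (intro divide_left_mono) auto
  qed
  also have "\<dots> \<le> inverse (real n)" using n(1) by (simp add: divide_simps)
  finally show False using n(2) by simp
qed



definition Qp :: "real \<Rightarrow> bool" where
  "Qp x \<longleftrightarrow> (\<exists>a b c::int. (a,b,c) \<noteq> (0,0,0) \<and> of_int a * x^2 + of_int b * x + of_int c = 0)"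

lemma Q_pull: assumes "1<x" "x<2" "Qp (lehner_map x)" shows "Qp x"
proof -
  obtain a b c :: int where abc: "(a,b,c) \<noteq> (0,0,0)"
    "of_int a * (lehner_map x)^2 + of_int b * lehner_map x + of_int c = 0"
    using assms(3) unfolding Qp_def by blast
  show ?thesis
  proof (cases "x < 3/2")
    case True
    have T: "lehner_map x = 1/(2-x)" using True by (simp add: lehner_map_def)
    have nz: "2 - x \<noteq> 0" using assms by simp
    have "of_int a + of_int b * (2-x) + of_int c * (2-x)^2 = (0::real)"
    proof -
      have h: "(2-x) * lehner_map x = 1" using T nz by simp
      have "(0::real) = (of_int a * (lehner_map x)^2 + of_int b * lehner_map x + of_int c) * (2-x)^2"
        using abc(2) by simp
      also have "\<dots> = of_int a * ((2-x) * lehner_map x)^2 + of_int b * ((2-x) * lehner_map x) * (2-x) + of_int c * (2-x)^2"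
        by (simp add: power2_eq_square algebra_simps)
      also have "\<dots> = of_int a + of_int b * (2-x) + of_int c * (2-x)^2" unfolding h by simp
      finally show ?thesis by simp
    qed
    then have "of_int c * x^2 + of_int (-b-4*c) * x + of_int (a+2*b+4*c) = (0::real)"
      by (simp add: algebra_simps power2_eq_square)
    moreover have "(c, -b-4*c, a+2*b+4*c) \<noteq> (0,0,0)" using abc(1) by auto
    ultimately show ?thesis unfolding Qp_def by blast
  next
    case False
    have T: "lehner_map x = 1/(x-1)" using False by (simp add: lehner_map_def)
    have nz: "x - 1 \<noteq> 0" using assms by simp
    have "of_int a + of_int b * (x-1) + of_int c * (x-1)^2 = (0::real)"
    proof -
      have h: "(x-1) * lehner_map x = 1" using T nz by simp
      have "(0::real) = (of_int a * (lehner_map x)^2 + of_int b * lehner_map x + of_int c) * (x-1)^2"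
        using abc(2) by simp
      also have "\<dots> = of_int a * ((x-1) * lehner_map x)^2 + of_int b * ((x-1) * lehner_map x) * (x-1) + of_int c * (x-1)^2"
        by (simp add: power2_eq_square algebra_simps)
      also have "\<dots> = of_int a + of_int b * (x-1) + of_int c * (x-1)^2" unfolding h by simp
      finally show ?thesis by simp
    qed
    then have "of_int c * x^2 + of_int (b-2*c) * x + of_int (a-b+c) = (0::real)"
      by (simp add: algebra_simps power2_eq_square)
    moreover have "(c, b-2*c, a-b+c) \<noteq> (0,0,0)" using abc(1) by auto
    ultimately show ?thesis unfolding Qp_def by blast
  qed
qed

lemma Q_irr: assumes "x \<notin> \<rat>" "Qp x" shows "quadratic_irrational x"
proof -
  obtain a b c :: int where abc: "(a,b,c) \<noteq> (0,0,0)"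
    "of_int a * x^2 + of_int b * x + of_int c = 0"
    using assms(2) unfolding Qp_def by blast
  show ?thesis
  proof (cases "a = 0")
    case False then show ?thesis using abc assms(1) unfolding quadratic_irrational_def by blast
  next
    case True
    show ?thesis
    proof (cases "b = 0")
      case True
      then show ?thesis using abc \<open>a = 0\<close> by simp
    next
      case False
      have "of_int b * x = - of_int c" using abc(2) \<open>a=0\<close> by simp
      then have "x = - of_int c / of_int b" using False by (simp add: field_simps)
      then have "x \<in> \<rat>" by simp
      then show ?thesis using assms(1) by simp
    qed
  qed
qed

lemma Q_funpow: assumes "1<x" "x<2" "x\<notin>\<rat>" "Qp ((lehner_map^^n) x)" shows "Qp x"
  using assms
proof (induction n arbitrary: x)
  case 0 then show ?case by simp
next
  case (Suc n)
  have "1 < lehner_map x" "lehner_map x < 2" "lehner_map x \<notin> \<rat>"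
    using T_range T_irr Suc.prems by auto
  moreover have "Qp ((lehner_map^^n) (lehner_map x))" using Suc.prems(4) by (simp add: funpow_Suc_right del: funpow.simps)
  ultimately have "Qp (lehner_map x)" using Suc.IH by blast
  then show ?case using Q_pull Suc.prems by blast
qed

lemma Q_fix: assumes y: "1<y" "y<2" "y\<notin>\<rat>" and p: "p > 0" and fx: "(lehner_map^^p) y = y"
  shows "Qp y"
proof -
  obtain P Q R W :: int where R: "R \<ge> 0" "W \<ge> 1" "W*(R+W) \<ge> int p + 1" "\<bar>P*W - Q*R\<bar> = 1"
     "y - 1 = (of_int P*((lehner_map^^p) y - 1) + of_int Q)/(of_int R*((lehner_map^^p) y - 1) + of_int W)"
    using rep[OF y y, of p] by blast
  have Rnz: "R \<noteq> 0"
  proof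
    assume "R = 0"
    then have "\<bar>P\<bar> * W = 1" using R(2,4) by (simp add: abs_mult)
    then have "W = 1" using R(2) using pos_zmult_eq_1_iff[of W "\<bar>P\<bar>"] by (simp add: mult.commute)
    then show False using R(3) \<open>R=0\<close> p by simp
  qed
  define u where "u = y - 1"
  have u: "0 < u" using y u_def by simp
  have "of_int R * u \<ge> (0::real)" using u R(1) by simp
  moreover have "(of_int W::real) \<ge> 1" using R(2) by simp
  ultimately have den: "of_int R * u + of_int W > (0::real)" by linarith
  have "u = (of_int P * u + of_int Q) / (of_int R * u + of_int W)" using R(5) fx u_def by simp
  then have "u * (of_int R * u + of_int W) = of_int P * u + of_int Q" using den by (simp add: field_simps)
  then have "of_int R * y^2 + of_int (W - P - 2*R) * y + of_int (R - W + P - Q) = (0::real)"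
    unfolding u_def by (simp add: algebra_simps power2_eq_square)
  then show ?thesis unfolding Qp_def using Rnz by blast
qed

lemma digit_eq: "lehner_digit x i = lehner_digit x j \<longleftrightarrow> ((lehner_map^^i) x < 3/2 \<longleftrightarrow> (lehner_map^^j) x < 3/2)"
  by (simp add: lehner_digit_def)

lemma dir1: assumes a: "1 < \<alpha>" "\<alpha> < 2" "\<alpha> \<notin> \<rat>" and ep: "eventually_periodic (lehner_digit \<alpha>)"
  shows "quadratic_irrational \<alpha>"
proof -
  obtain N p where Np: "p > 0" "\<forall>i\<ge>N. lehner_digit \<alpha> (i + p) = lehner_digit \<alpha> i"
    using ep unfolding eventually_periodic_def by blast
  define y where "y = (lehner_map^^N) \<alpha>"
  define z where "z = (lehner_map^^p) y"
  have y: "1<y" "y<2" "y\<notin>\<rat>" using Tn_props[OF a] y_def by auto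
  have z: "1<z" "z<2" "z\<notin>\<rat>" using Tn_props[OF y] z_def by auto
  have "\<forall>i. ((lehner_map^^i) z < 3/2 \<longleftrightarrow> (lehner_map^^i) y < 3/2)"
  proof
    fix i
    have e1: "(lehner_map^^i) z = (lehner_map^^(i+N+p)) \<alpha>"
    proof -
      have "(lehner_map^^i) z = (lehner_map^^(i+(p+N))) \<alpha>" unfolding z_def y_def by (simp only: funpow_add o_apply)
      also have "i+(p+N) = i+N+p" by simp
      finally show ?thesis .
    qed
    have e2: "(lehner_map^^i) y = (lehner_map^^(i+N)) \<alpha>"
      unfolding y_def by (simp add: funpow_add)
    have "lehner_digit \<alpha> (i+N+p) = lehner_digit \<alpha> (i+N)" using Np(2) by simp
    then show "((lehner_map^^i) z < 3/2 \<longleftrightarrow> (lehner_map^^i) y < 3/2)"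
      unfolding e1 e2 digit_eq .
  qed
  then have "z = y" using cylinder[OF z y] by blast
  then have "Qp y" using Q_fix[OF y Np(1)] z_def by simp
  then have "Qp \<alpha>" using Q_funpow[OF a] y_def by blast
  then show ?thesis using Q_irr a(3) by blast
qed



fun betas :: "real \<Rightarrow> real \<Rightarrow> nat \<Rightarrow> real" where
  "betas al be 0 = be"
| "betas al be (Suc n) = (if (lehner_map^^n) al < 3/2 then 1/(2 - betas al be n) else 1/(betas al be n - 1))"

fun polys :: "real \<Rightarrow> int\<times>int\<times>int \<Rightarrow> nat \<Rightarrow> int\<times>int\<times>int" where
  "polys al f 0 = f"
| "polys al f (Suc n) = (case polys al f n of (a,b,c) \<Rightarrow>
     if (lehner_map^^n) al < 3/2 then (4*a+2*b+c, -4*a-b, a) else (a+b+c, 2*a+b, a))"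

lemma br1: fixes A B C x be :: real
  assumes "A \<noteq> 0" "x \<noteq> 2" "be \<noteq> 2" "B = -A*(x+be)" "C = A*x*be"
  shows "4*A+2*B+C = A*(2-x)*(2-be)" "-4*A - B = -(A*(2-x)*(2-be))*(1/(2-x)+1/(2-be))"
        "A = (A*(2-x)*(2-be))*(1/(2-x))*(1/(2-be))"
proof -
  have n: "2 - x \<noteq> 0" "2 - be \<noteq> 0" using assms by auto
  show "4*A+2*B+C = A*(2-x)*(2-be)" using assms by (simp add: algebra_simps)
  have e: "(A*(2-x)*(2-be))*(1/(2-x)+1/(2-be)) = A*((2-be)+(2-x))"
    using n by (simp add: distrib_left) (simp add: algebra_simps)
  show "-4*A - B = -(A*(2-x)*(2-be))*(1/(2-x)+1/(2-be))" unfolding minus_mult_left[symmetric] e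
    using assms by (simp add: algebra_simps)
  show "A = (A*(2-x)*(2-be))*(1/(2-x))*(1/(2-be))" using n by simp
qed

lemma br2: fixes A B C x be :: real
  assumes "A \<noteq> 0" "x \<noteq> 1" "be \<noteq> 1" "B = -A*(x+be)" "C = A*x*be"
  shows "A+B+C = A*(1-x)*(1-be)" "2*A + B = -(A*(1-x)*(1-be))*(1/(x-1)+1/(be-1))"
        "A = (A*(1-x)*(1-be))*(1/(x-1))*(1/(be-1))"
proof -
  have n: "x - 1 \<noteq> 0" "be - 1 \<noteq> 0" using assms by auto
  show "A+B+C = A*(1-x)*(1-be)" using assms by (simp add: algebra_simps)
  have e: "(A*(1-x)*(1-be))*(1/(x-1)+1/(be-1)) = A*((1-be)*(-1)+(1-x)*(-1))"
  proof -
    obtain i j where ij: "i = 1/(x-1)" "j = 1/(be-1)" by blast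
    have a: "i*(x-1) = 1" "j*(be-1) = 1" using n ij by simp_all
    have "(1-x)*i = -(i*(x-1))" "(1-be)*j = -(j*(be-1))" by (simp_all add: algebra_simps)
    then have h: "(1-x)*i = -1" "(1-be)*j = -1" using a by simp_all
    have "(A*(1-x)*(1-be))*(i+j) = A*(1-be)*((1-x)*i) + A*(1-x)*((1-be)*j)" by (simp add: algebra_simps)
    also have "\<dots> = A*((1-be)*(-1)+(1-x)*(-1))" unfolding h by (simp add: algebra_simps)
    finally show ?thesis using ij by simp
  qed
  show "2*A + B = -(A*(1-x)*(1-be))*(1/(x-1)+1/(be-1))" unfolding minus_mult_left[symmetric] e
    using assms by (simp add: algebra_simps)
  have e: "A*(1-x)*(1-be) = A*((x-1)*(be-1))" by (simp add: algebra_simps)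
  have "(A*((x-1)*(be-1)))*(1/(x-1))*(1/(be-1)) = A * ((x-1)/(x-1)) * ((be-1)/(be-1))" by simp
  also have "\<dots> = A" using n by simp
  finally show "A = (A*(1-x)*(1-be))*(1/(x-1))*(1/(be-1))" unfolding e by simp
qed

lemma inv:
  assumes al: "1 < al" "al < 2" "al \<notin> \<rat>" and a: "a \<noteq> 0"
    and bb: "of_int b = -of_int a*(al+be)" and cc: "of_int c = of_int a*al*be" and be: "be \<notin> \<rat>"
  shows "betas al be n \<notin> \<rat> \<and> (\<forall>A B C. polys al (a,b,c) n = (A,B,C) \<longrightarrow> A \<noteq> 0 \<and>
     of_int B = -of_int A*((lehner_map^^n) al + betas al be n) \<and>
     of_int C = of_int A*(lehner_map^^n) al * betas al be n \<and> B^2 - 4*A*C = b^2 - 4*a*c)"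
proof (induction n)
  case 0
  then show ?case using a bb cc be by simp
next
  case (Suc n)
  define x where "x = (lehner_map^^n) al"
  define y where "y = betas al be n"
  obtain A B C where P: "polys al (a,b,c) n = (A,B,C)" by (cases "polys al (a,b,c) n") auto
  have I: "y \<notin> \<rat>" "A \<noteq> 0" "of_int B = -of_int A*(x+y)" "of_int C = of_int A*x*y" "B^2-4*A*C = b^2-4*a*c"
    using Suc.IH P x_def y_def by auto
  have x: "1 < x" "x < 2" "x \<notin> \<rat>" using Tn_props[OF al] x_def by auto
  have y2: "y \<noteq> 2" "y \<noteq> 1" using I(1) by (metis Rats_number_of, metis Rats_1)
  have sx: "(lehner_map^^Suc n) al = lehner_map x" using x_def by simp
  have A0: "real_of_int A \<noteq> 0" using I(2) by simp
  have ca: "real_of_int (4*A+2*B+C) = 4*of_int A+2*of_int B+of_int C" "real_of_int (-4*A-B) = -4*of_int A-of_int B"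
    "real_of_int (A+B+C) = of_int A+of_int B+of_int C" "real_of_int (2*A+B) = 2*of_int A+of_int B" by simp_all
  show ?case
  proof (cases "x < 3/2")
    case True
    have sb: "betas al be (Suc n) = 1/(2-y)" using True x_def y_def by simp
    have pp: "polys al (a,b,c) (Suc n) = (4*A+2*B+C, -4*A-B, A)" using True P x_def by simp
    have lx: "lehner_map x = 1/(2-x)" using True by (simp add: lehner_map_def)
    have x2: "x \<noteq> 2" using x by simp
    note R = br1[OF A0 x2 y2(1) I(3) I(4)]
    have e1: "real_of_int (4*A+2*B+C) = of_int A*(2-x)*(2-y)" using R(1) ca(1) by simp
    have "of_int A*(2-x)*(2-y) \<noteq> (0::real)" using A0 x2 y2 by simp
    then have "4*A+2*B+C \<noteq> 0" using e1 by (metis of_int_0)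
    moreover have "real_of_int (-4*A-B) = - real_of_int (4*A+2*B+C) * (lehner_map x + betas al be (Suc n))"
      unfolding sb lx ca(2) e1 using R(2) by simp
    moreover have "real_of_int A = real_of_int (4*A+2*B+C) * lehner_map x * betas al be (Suc n)"
      unfolding sb lx e1 using R(3) by simp
    moreover have "(-4*A-B)^2 - 4*(4*A+2*B+C)*A = b^2-4*a*c" using I(5) by (simp add: power2_eq_square algebra_simps)
    moreover have "betas al be (Suc n) \<notin> \<rat>" unfolding sb using irr1 I(1) by simp
    ultimately show ?thesis unfolding pp sx by blast
  next
    case False
    have sb: "betas al be (Suc n) = 1/(y-1)" using False x_def y_def by simp
    have pp: "polys al (a,b,c) (Suc n) = (A+B+C, 2*A+B, A)" using False P x_def by simp
    have lx: "lehner_map x = 1/(x-1)" using False by (simp add: lehner_map_def)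
    have x2: "x \<noteq> 1" using x by simp
    note R = br2[OF A0 x2 y2(2) I(3) I(4)]
    have e1: "real_of_int (A+B+C) = of_int A*(1-x)*(1-y)" using R(1) ca(3) by simp
    have "of_int A*(1-x)*(1-y) \<noteq> (0::real)" using A0 x2 y2 by simp
    then have "A+B+C \<noteq> 0" using e1 by (metis of_int_0)
    moreover have "real_of_int (2*A+B) = - real_of_int (A+B+C) * (lehner_map x + betas al be (Suc n))"
      unfolding sb lx ca(4) e1 using R(2) by simp
    moreover have "real_of_int A = real_of_int (A+B+C) * lehner_map x * betas al be (Suc n)"
      unfolding sb lx e1 using R(3) by simp
    moreover have "(2*A+B)^2 - 4*(A+B+C)*A = b^2-4*a*c" using I(5) by (simp add: power2_eq_square algebra_simps)
    moreover have "betas al be (Suc n) \<notin> \<rat>" unfolding sb using irr2 I(1) by simp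
    ultimately show ?thesis unfolding pp sx by blast
  qed
qed



lemma intbound: fixes A B C D :: int
  assumes "A \<noteq> 0" "A*C < 0" "D = B^2 - 4*A*C"
  shows "\<bar>A\<bar> \<le> D \<and> \<bar>B\<bar> \<le> D \<and> \<bar>C\<bar> \<le> D"
proof -
  have C0: "C \<noteq> 0" using assms(2) by auto
  have "\<bar>A*C\<bar> = - (A*C)" using assms(2) by simp
  then have p: "\<bar>A\<bar> * \<bar>C\<bar> = - (A*C)" by (simp add: abs_mult)
  have c1: "\<bar>C\<bar> \<ge> 1" using C0 by (cases "C > 0") auto
  have a1: "\<bar>A\<bar> \<ge> 1" using assms(1) by (cases "A > 0") auto
  have "\<bar>A\<bar> \<le> \<bar>A\<bar> * \<bar>C\<bar>" using mult_left_mono[OF c1, of "\<bar>A\<bar>"] by simp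
  moreover have "\<bar>C\<bar> \<le> \<bar>A\<bar> * \<bar>C\<bar>" using mult_right_mono[OF a1, of "\<bar>C\<bar>"] by simp
  moreover have "B^2 \<ge> 0" by simp
  moreover have "\<bar>B\<bar> \<le> B^2"
  proof (cases "B = 0")
    case False
    have b1: "\<bar>B\<bar> \<ge> 1" using False by (cases "B > 0") auto
    have "\<bar>B\<bar> \<le> \<bar>B\<bar> * \<bar>B\<bar>" using mult_left_mono[OF b1, of "\<bar>B\<bar>"] by simp
    also have "\<bar>B\<bar> * \<bar>B\<bar> = B^2" by (simp add: power2_eq_square abs_mult[symmetric])
    finally show ?thesis .
  qed simp
  ultimately show ?thesis using p assms(3) by linarith
qed

lemma dir2: assumes al: "1 < al" "al < 2" "al \<notin> \<rat>" and q: "quadratic_irrational al"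
  shows "eventually_periodic (lehner_digit al)"
proof -
  obtain a b c :: int where a: "a \<noteq> 0" and eq: "of_int a * al^2 + of_int b * al + of_int c = 0"
    using q unfolding quadratic_irrational_def by blast
  define be where "be = - of_int b / of_int a - al"
  have ar: "real_of_int a \<noteq> 0" using a by simp
  have bb: "of_int b = -of_int a*(al+be)" unfolding be_def using ar by (simp add: field_simps)
  have cc: "of_int c = of_int a*al*be"
  proof -
    have "of_int a*al*be = - of_int b * al - of_int a * al^2" unfolding be_def using ar
      by (simp add: field_simps power2_eq_square)
    then show ?thesis using eq by linarith
  qed
  have beQ: "be \<notin> \<rat>"
  proof
    assume "be \<in> \<rat>"
    then have "- of_int b / of_int a - be \<in> \<rat>" by (intro Rats_diff Rats_divide) auto
    then show False using al(3) unfolding be_def by simp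
  qed
  have bene: "be \<noteq> al"
  proof
    assume "be = al"
    then have "al = - of_int b / (2 * of_int a)" unfolding be_def using ar by (simp add: field_simps)
    then have "al \<in> \<rat>" by simp
    then show False using al(3) by simp
  qed
  define D where "D = b^2 - 4*a*c"
  define xs where "xs n = (lehner_map^^n) al" for n
  define bs where "bs n = betas al be n" for n
  have I: "bs n \<notin> \<rat> \<and> (\<forall>A B C. polys al (a,b,c) n = (A,B,C) \<longrightarrow> A \<noteq> 0 \<and>
     of_int B = -of_int A*(xs n + bs n) \<and> of_int C = of_int A*xs n * bs n \<and> B^2 - 4*A*C = D)" for n
    using inv[OF al a bb cc beQ, of n] unfolding xs_def bs_def D_def by blast
  have X: "1 < xs n" "xs n < 2" "xs n \<notin> \<rat>" for n using Tn_props[OF al] xs_def by auto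
  have bs12: "bs n \<noteq> 1" "bs n \<noteq> 2" "bs n \<noteq> 3/2" for n using I[of n]
    by (metis Rats_1, metis Rats_number_of, metis Rats_divide Rats_number_of)
  have bsS: "bs (Suc n) = (if xs n < 3/2 then 1/(2 - bs n) else 1/(bs n - 1))" for n
    unfolding bs_def xs_def by simp
  have stepA: "bs n < 1 \<Longrightarrow> bs (Suc n) < 1" for n
  proof -
    assume h: "bs n < 1"
    show ?thesis
    proof (cases "xs n < 3/2")
      case True
      have "1/(2 - bs n) < 1" using h by (simp add: divide_simps)
      then show ?thesis using True bsS by simp
    next
      case False
      have "1/(bs n - 1) < 0" using h by (simp add: divide_simps)
      then show ?thesis using False bsS by simp
    qed
  qed
  have stepB: "bs n > 2 \<Longrightarrow> bs (Suc n) < 1" for n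
  proof -
    assume h: "bs n > 2"
    show ?thesis
    proof (cases "xs n < 3/2")
      case True
      have "1/(2 - bs n) < 0" using h by (simp add: divide_simps)
      then show ?thesis using True bsS by simp
    next
      case False
      have "1/(bs n - 1) < 1" using h by (simp add: divide_simps)
      then show ?thesis using False bsS by simp
    qed
  qed
  have notall: "\<not> (\<forall>n. 1 < bs n \<and> bs n < 2)"
  proof
    assume all: "\<forall>n. 1 < bs n \<and> bs n < 2"
    have br: "xs n < 3/2 \<longleftrightarrow> bs n < 3/2" for n
    proof
      assume h: "xs n < 3/2"
      show "bs n < 3/2"
      proof (rule ccontr)
        assume "\<not> bs n < 3/2"
        then have "bs n \<ge> 3/2" by simp
        then have "1/(2 - bs n) \<ge> 2" using all by (simp add: divide_simps)
        then show False using all[rule_format, of "Suc n"] bsS[of n] h by simp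
      qed
    next
      assume h: "bs n < 3/2"
      show "xs n < 3/2"
      proof (rule ccontr)
        assume h2: "\<not> xs n < 3/2"
        have "1/(bs n - 1) > 2" using all h by (simp add: divide_simps)
        then show False using all[rule_format, of "Suc n"] bsS[of n] h2 by simp
      qed
    qed
    have tb: "(lehner_map^^n) be = bs n" for n
    proof (induction n)
      case 0 then show ?case by (simp add: bs_def)
    next
      case (Suc n)
      then show ?case using bsS[of n] br[of n] by (simp add: lehner_map_def)
    qed
    have be12: "1 < be" "be < 2" using all[rule_format, of 0] by (simp_all add: bs_def)
    have "al = be"
      using cylinder[OF al be12 beQ] br tb unfolding xs_def by simp
    then show False using bene by simp
  qed
  then obtain n1 where "\<not> (1 < bs n1 \<and> bs n1 < 2)" by blast
  then have "bs n1 < 1 \<or> bs n1 > 2" using bs12[of n1] by force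
  then have h1: "bs (Suc n1) < 1" using stepA stepB by blast
  have small: "bs n < 1" if "n \<ge> Suc n1" for n
    using that
  proof (induction n rule: dec_induct)
    case base then show ?case using h1 by simp
  next
    case (step n) then show ?case using stepA by blast
  qed
  define n0 where "n0 = Suc n1"
  define S where "S = {-3*D..3*D} \<times> {-3*D..3*D} \<times> {-3*D..3*D}"
  have inS: "polys al (a,b,c) n \<in> S" if "n \<ge> n0" for n
  proof -
    obtain A B C where P: "polys al (a,b,c) n = (A,B,C)" by (cases "polys al (a,b,c) n") auto
    have J: "A \<noteq> 0" "of_int B = -of_int A*(xs n + bs n)" "of_int C = of_int A*xs n * bs n" "B^2 - 4*A*C = D"
      using I[of n] P by auto
    have y: "bs n < 1" using small that n0_def by simp
    have "real_of_int (A*(A+B+C)) = of_int A * (of_int A + of_int B + of_int C)" by simp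
    also have "\<dots> = of_int A * (of_int A + (-of_int A*(xs n + bs n)) + of_int A*xs n * bs n)"
      by (simp only: J(2) J(3))
    also have "\<dots> = (of_int A)^2 * ((1 - xs n)*(1 - bs n))" by (simp add: algebra_simps power2_eq_square)
    finally have "real_of_int (A*(A+B+C)) = (of_int A)^2 * ((1 - xs n)*(1 - bs n))" .
    moreover have "(of_int A)^2 * ((1 - xs n)*(1 - bs n)) < (0::real)"
    proof -
      have "(1 - xs n)*(1 - bs n) < 0" using X[of n] y by (simp add: mult_neg_pos)
      moreover have "(of_int A)^2 > (0::real)" using J(1) by simp
      ultimately show ?thesis by (simp add: mult_pos_neg)
    qed
    ultimately have neg: "A*(A+B+C) < 0" by (metis of_int_less_0_iff)
    have "D = (2*A+B)^2 - 4*A*(A+B+C)" using J(4) by (simp add: power2_eq_square algebra_simps)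
    then have "\<bar>A\<bar> \<le> D \<and> \<bar>2*A+B\<bar> \<le> D \<and> \<bar>A+B+C\<bar> \<le> D" using intbound[OF J(1) neg] by blast
    then have "\<bar>A\<bar> \<le> 3*D" "\<bar>B\<bar> \<le> 3*D" "\<bar>C\<bar> \<le> 3*D" by linarith+
    then show ?thesis unfolding P S_def by (auto simp: abs_le_iff)
  qed
  define f where "f k = polys al (a,b,c) (n0 + k)" for k
  have "f ` UNIV \<subseteq> S" using inS f_def by auto
  moreover have "finite S" unfolding S_def by simp
  ultimately have "finite (f ` UNIV)" by (rule finite_subset)
  then have "\<not> inj f" using finite_imageD infinite_UNIV_nat by blast
  then obtain k1 k2 where k: "f k1 = f k2" "k1 \<noteq> k2" unfolding inj_def by blast
  obtain m n where mn: "m < n" "m \<ge> n0" "polys al (a,b,c) m = polys al (a,b,c) n"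
  proof (cases "k1 < k2")
    case True then show ?thesis using that[of "n0+k1" "n0+k2"] k f_def by simp
  next
    case False then have "k2 < k1" using k by simp
    then show ?thesis using that[of "n0+k2" "n0+k1"] k f_def by simp
  qed
  obtain A B C where P: "polys al (a,b,c) m = (A,B,C)" by (cases "polys al (a,b,c) m") auto
  have Jm: "A \<noteq> 0" "of_int B = -of_int A*(xs m + bs m)" "of_int C = of_int A*xs m * bs m"
    using I[of m] P by auto
  have Jn: "of_int B = -of_int A*(xs n + bs n)" "of_int C = of_int A*xs n * bs n"
    using I[of n] P mn(3) by auto
  have A0: "real_of_int A \<noteq> 0" using Jm(1) by simp
  have s: "xs m + bs m = xs n + bs n" using Jm(2) Jn(1) A0 by simp
  have pr: "xs m * bs m = xs n * bs n" using Jm(3) Jn(2) A0 by (simp add: mult.assoc)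
  have "(xs n - xs m)*(xs n - bs m) = xs n ^2 - xs n*(xs m + bs m) + xs m * bs m"
    by (simp add: algebra_simps power2_eq_square)
  also have "\<dots> = 0" unfolding s pr by (simp add: algebra_simps power2_eq_square)
  finally have z: "(xs n - xs m)*(xs n - bs m) = 0" .
  have "bs m < 1" using small mn(2) n0_def by simp
  then have "xs n - bs m \<noteq> 0" using X[of n] by simp
  then have xeq: "xs n = xs m" using z by simp
  show ?thesis unfolding eventually_periodic_def
  proof (intro exI conjI allI impI)
    show "0 < n - m" using mn by simp
    fix i assume i: "m \<le> i"
    have "(lehner_map^^(i + (n-m))) al = (lehner_map^^(i-m)) (xs n)"
    proof -
      have "i + (n-m) = (i-m) + n" using i mn by simp
      then show ?thesis unfolding xs_def by (simp only: funpow_add o_apply)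
    qed
    also have "\<dots> = (lehner_map^^(i-m)) (xs m)" using xeq by simp
    also have "\<dots> = (lehner_map^^i) al"
    proof -
      have "i = (i-m) + m" using i by simp
      then show ?thesis unfolding xs_def by (metis funpow_add o_apply)
    qed
    finally show "lehner_digit al (i + (n-m)) = lehner_digit al i" unfolding lehner_digit_def by simp
  qed
qed

theorem proposition6p4:
  fixes \<alpha> :: real
  assumes "1 < \<alpha>" and "\<alpha> < 2" and "\<alpha> \<notin> \<rat>"
  shows "eventually_periodic (lehner_digit \<alpha>) \<longleftrightarrow> quadratic_irrational \<alpha>"
  using dir1[OF assms] dir2[OF assms] by blast


end
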